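(* There is an absolute constant $C$ such that the following holds. Let $x,z\in\mathbb{R}^3$ with $r=|x-z|>0$, and choose Cartesian coordinates in which $x=(-r/2,0,0)$ and $z=(r/2,0,0)$. For $y\in\mathbb{R}^3$ let $\rho=|x-y|+|y-z|$ and let $\theta\in(0,\pi)$, $\phi\in[0,2\pi)$ be the elliptical coordinates of $y$ defined by $$y_1=\tfrac{\rho}{2}\cos\theta,\quad y_2=\tfrac{\sqrt{\rho^2-r^2}}{2}\sin\theta\cos\phi,\quad y_3=\tfrac{\sqrt{\rho^2-r^2}}{2}\sin\theta\sin\phi.$$ Then for every $f\in\mathcal K_2$, $$\int_{\{y:\ \rho\le 2r\}}\frac{|f(y)|\,dy}{r\sqrt{\rho^2-r^2}\,\sin\theta}\le C\|f\|_{\mathcal K_2}.$$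
   Context: $\mathcal K_2$ is the space of functions on $\mathbb{R}^3$ with $\|f\|_{\mathcal K_2}=\sup_{w\in\mathbb{R}^3}\int_{\mathbb{R}^3}\frac{|f(y)|}{|y-w|^2}dy<\infty$. *)

theory Defs
  imports "HOL-Analysis.Analysis"
begin

definition K2_norm :: "(real^3 \<Rightarrow> real) \<Rightarrow> ennreal" where
  "K2_norm f = (SUP w. \<integral>\<^sup>+ y. ennreal (\<bar>f y\<bar> / (norm (y - w))\<^sup>2) \<partial>lborel)"

definition K2 :: "(real^3 \<Rightarrow> real) set" where
  "K2 = {f. f \<in> borel_measurable lborel \<and> K2_norm f < \<infinity>}"

definition focus_x :: "real \<Rightarrow> real^3" where
  "focus_x r = vector [- r / 2, 0, 0]"
definition focus_z :: "real \<Rightarrow> real^3" where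
  "focus_z r = vector [r / 2, 0, 0]"

definition ell_rho :: "real \<Rightarrow> real^3 \<Rightarrow> real" where
  "ell_rho r y = dist (focus_x r) y + dist y (focus_z r)"
definition ell_theta :: "real \<Rightarrow> real^3 \<Rightarrow> real" where
  "ell_theta r y = arccos (2 * y $ 1 / ell_rho r y)"

end

theory Submission
  imports Defs
begin

lemma norm3_sq: "(norm (v::real^3))\<^sup>2 = (v$1)\<^sup>2 + (v$2)\<^sup>2 + (v$3)\<^sup>2"
proof -
  have "(norm v)\<^sup>2 = inner v v" by (simp add: power2_norm_eq_inner)
  also have "\<dots> = (v$1)\<^sup>2 + (v$2)\<^sup>2 + (v$3)\<^sup>2" by (simp add: inner_vec_def sum_3 power2_eq_square)
  finally show ?thesis .
qed

lemma ellid: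
  fixes A B r y1 d2 :: real
  assumes "A^2 = (y1 + r/2)^2 + d2" "B^2 = (y1 - r/2)^2 + d2"
  shows "((A+B)^2 - r^2) * ((A+B)^2 - 4*y1^2) = 4*(A+B)^2*d2"
proof -
  define S where "S = A + B"
  have 1: "(A - B) * S = 2*r*y1" using assms unfolding S_def by (simp add: algebra_simps power2_eq_square)
  have 2: "S^2 + (A - B)^2 = 4*y1^2 + r^2 + 4*d2" using assms unfolding S_def by (simp add: algebra_simps power2_eq_square)
  have 3: "4*r^2*y1^2 = S^2 * (4*y1^2 + r^2 + 4*d2 - S^2)"
  proof -
    have "4*r^2*y1^2 = ((A - B) * S)^2" using 1 by (simp add: power2_eq_square)
    also have "\<dots> = S^2 * (A - B)^2" by (simp add: power_mult_distrib)
    finally show ?thesis using 2 by simp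
  qed
  show ?thesis unfolding S_def[symmetric] using 3 by (simp add: algebra_simps power2_eq_square)
qed
lemma absdiv_le1: "\<bar>a\<bar> \<le> s \<Longrightarrow> 0 < (s::real) \<Longrightarrow> \<bar>a / s\<bar> \<le> 1"
  by (simp add: abs_divide)

lemma sq_le: "0 \<le> (A::real) \<Longrightarrow> a\<^sup>2 \<le> A\<^sup>2 \<Longrightarrow> \<bar>a\<bar> \<le> A"
  by (metis abs_le_square_iff abs_of_nonneg)

lemma geo:
  fixes r :: real and y :: "real^3"
  assumes r: "r > 0" and E: "ell_rho r y \<le> 2 * r"
  defines "d \<equiv> sqrt ((y$2)\<^sup>2 + (y$3)\<^sup>2)"
  shows "\<bar>y$1\<bar> \<le> r" "d \<le> r"
    "r * sqrt ((ell_rho r y)\<^sup>2 - r\<^sup>2) * sin (ell_theta r y) = 2 * r * d"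
proof -
  define A where "A = dist (focus_x r) y"
  define B where "B = dist y (focus_z r)"
  have rho: "ell_rho r y = A + B" by (simp add: ell_rho_def A_def B_def)
  have d2: "d\<^sup>2 = (y$2)\<^sup>2 + (y$3)\<^sup>2" unfolding d_def by simp
  have d0: "d \<ge> 0" unfolding d_def by simp
  have A2: "A\<^sup>2 = (y$1 + r/2)\<^sup>2 + d\<^sup>2"
    unfolding A_def dist_norm norm3_sq d2 by (simp add: focus_x_def power2_eq_square algebra_simps)
  have B2: "B\<^sup>2 = (y$1 - r/2)\<^sup>2 + d\<^sup>2"
    unfolding B_def dist_norm norm3_sq d2 by (simp add: focus_z_def power2_eq_square algebra_simps)
  have A0: "A \<ge> 0" "B \<ge> 0" by (simp_all add: A_def B_def)
  have Ay: "\<bar>y$1 + r/2\<bar> \<le> A" using A2 A0 by (intro sq_le) auto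
  have By: "\<bar>y$1 - r/2\<bar> \<le> B" using B2 A0 by (intro sq_le) auto
  have Ad: "\<bar>d\<bar> \<le> A" using A2 A0 by (intro sq_le) auto
  have Bd: "\<bar>d\<bar> \<le> B" using B2 A0 by (intro sq_le) auto
  have rle: "r \<le> A + B" using Ay By by linarith
  have y1le: "\<bar>2 * y$1\<bar> \<le> A + B" using Ay By by linarith
  show "\<bar>y$1\<bar> \<le> r" using y1le E rho by linarith
  show "d \<le> r" using Ad Bd E rho by linarith
  have pos: "A + B > 0" using rle r by linarith
  have c: "\<bar>2 * y$1 / (A + B)\<bar> \<le> 1" using y1le pos by (rule absdiv_le1)
  have sin: "sin (ell_theta r y) = sqrt (1 - (2 * y$1 / (A + B))\<^sup>2)"
    unfolding ell_theta_def rho using c by (simp add: sin_arccos_abs)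
  have id: "((A+B)^2 - r^2) * ((A+B)^2 - 4*(y$1)^2) = 4*(A+B)^2*d\<^sup>2"
    by (rule ellid[OF A2 B2])
  have q: "1 - (2 * y$1 / (A + B))\<^sup>2 = ((A+B)^2 - 4*(y$1)^2) / (A+B)^2"
    using pos by (simp add: power_divide diff_divide_distrib power_mult_distrib)
  have "((A+B)\<^sup>2 - r\<^sup>2) * (1 - (2 * y$1 / (A + B))\<^sup>2) = ((A+B)^2 - r^2) * ((A+B)^2 - 4*(y$1)^2) / (A+B)^2"
    unfolding q by simp
  also have "\<dots> = 4*(A+B)^2*d\<^sup>2 / (A+B)^2" unfolding id ..
  also have "\<dots> = (2*d)\<^sup>2" using pos by (simp add: power_mult_distrib)
  finally have e: "((A+B)\<^sup>2 - r\<^sup>2) * (1 - (2 * y$1 / (A + B))\<^sup>2) = (2*d)\<^sup>2" .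
  have "r * sqrt ((ell_rho r y)\<^sup>2 - r\<^sup>2) * sin (ell_theta r y)
      = r * sqrt (((A+B)\<^sup>2 - r\<^sup>2) * (1 - (2 * y$1 / (A + B))\<^sup>2))"
    unfolding sin rho by (simp add: real_sqrt_mult)
  also have "\<dots> = 2 * r * d" unfolding e using d0 by (simp add: real_sqrt_mult)
  finally show "r * sqrt ((ell_rho r y)\<^sup>2 - r\<^sup>2) * sin (ell_theta r y) = 2 * r * d" .
qed


definition e1 :: "real^3" where "e1 = vector [1, 0, 0]"

lemma normw_sq: "(norm (y - t *\<^sub>R e1))\<^sup>2 = (y$1 - t)\<^sup>2 + ((y$2)\<^sup>2 + (y$3)\<^sup>2)"
  unfolding norm3_sq by (simp add: e1_def)

lemma lower:
  fixes r d :: real and y :: "real^3"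
  assumes d: "d = sqrt ((y$2)\<^sup>2 + (y$3)\<^sup>2)" "d > 0" "d \<le> r" and y1: "\<bar>y$1\<bar> \<le> r"
  shows "ennreal (1 / d) \<le> (\<integral>\<^sup>+ t. indicator {-2*r..2*r} t * ennreal (1 / (norm (y - t *\<^sub>R e1))\<^sup>2) \<partial>lborel)"
proof -
  have d2: "d\<^sup>2 = (y$2)\<^sup>2 + (y$3)\<^sup>2" using d(1) by simp
  have mono: "(\<integral>\<^sup>+ t. ennreal (1 / (2 * d\<^sup>2)) * indicator {y$1 - d .. y$1 + d} t \<partial>lborel)
      \<le> (\<integral>\<^sup>+ t. indicator {-2*r..2*r} t * ennreal (1 / (norm (y - t *\<^sub>R e1))\<^sup>2) \<partial>lborel)"
  proof (rule nn_integral_mono)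
    fix t :: real
    show "ennreal (1 / (2 * d\<^sup>2)) * indicator {y$1 - d .. y$1 + d} t
      \<le> indicator {-2*r..2*r} t * ennreal (1 / (norm (y - t *\<^sub>R e1))\<^sup>2)"
    proof (cases "t \<in> {y$1 - d .. y$1 + d}")
      case True
      then have tI: "t \<in> {-2*r..2*r}" using y1 d by auto
      have "\<bar>y$1 - t\<bar> \<le> d" using True by auto
      then have "(y$1 - t)\<^sup>2 \<le> d\<^sup>2" using d(2) by (simp add: abs_le_square_iff[symmetric])
      then have n: "(norm (y - t *\<^sub>R e1))\<^sup>2 \<le> 2 * d\<^sup>2" "0 < (norm (y - t *\<^sub>R e1))\<^sup>2"
        unfolding normw_sq d2[symmetric] using d(2) by (auto intro: add_nonneg_pos)
      have "1 / (2 * d\<^sup>2) \<le> 1 / (norm (y - t *\<^sub>R e1))\<^sup>2"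
        using n d(2) by (intro divide_left_mono) auto
      then show ?thesis using True tI by (simp add: ennreal_leI)
    qed simp
  qed
  have "(\<integral>\<^sup>+ t. ennreal (1 / (2 * d\<^sup>2)) * indicator {y$1 - d .. y$1 + d} t \<partial>lborel)
     = ennreal (1 / (2 * d\<^sup>2)) * ennreal (2 * d)"
    using d(2) by (simp add: nn_integral_cmult_indicator)
  also have "\<dots> = ennreal (1 / d)"
    using d(2) by (simp add: ennreal_mult[symmetric] power2_eq_square)
  finally show ?thesis using mono by simp
qed

lemma meas_test:
  assumes f: "f \<in> borel_measurable (lborel :: (real^3) measure)"
  shows "(\<lambda>(y, t). ennreal c * (indicator {a..b} t * ennreal (\<bar>f y\<bar> / (norm (y - t *\<^sub>R e1))\<^sup>2)))
     \<in> borel_measurable ((lborel :: (real^3) measure) \<Otimes>\<^sub>M (lborel :: real measure))"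
  using f by measurable

theorem lemma5:
  shows "\<exists>C::real. \<forall>r::real. \<forall>f \<in> K2. r > 0 \<longrightarrow>
    (\<integral>\<^sup>+ y \<in> {y. ell_rho r y \<le> 2 * r}.
        ennreal (\<bar>f y\<bar> / (r * sqrt ((ell_rho r y)\<^sup>2 - r\<^sup>2) * sin (ell_theta r y))) \<partial>lborel)
      \<le> ennreal C * K2_norm f"
proof (intro exI[of _ 2] allI ballI impI)
  fix r :: real and f :: "real^3 \<Rightarrow> real"
  assume fK: "f \<in> K2" and r: "r > 0"
  have f: "f \<in> borel_measurable lborel" using fK by (simp add: K2_def)
  define c where "c = 1 / (2 * r)"
  define I where "I = {-2*r..2*r}"
  define F where "F = (\<lambda>y t. ennreal c * (indicator I t * ennreal (\<bar>f y\<bar> / (norm (y - t *\<^sub>R e1))\<^sup>2)))"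
  have Fm: "case_prod F \<in> borel_measurable ((lborel :: (real^3) measure) \<Otimes>\<^sub>M (lborel :: real measure))"
    unfolding F_def I_def by (rule meas_test[OF f])
  have c0: "c \<ge> 0" using r by (simp add: c_def)
  have step1: "(\<integral>\<^sup>+ y \<in> {y. ell_rho r y \<le> 2 * r}.
        ennreal (\<bar>f y\<bar> / (r * sqrt ((ell_rho r y)\<^sup>2 - r\<^sup>2) * sin (ell_theta r y))) \<partial>lborel)
      \<le> (\<integral>\<^sup>+ y. (\<integral>\<^sup>+ t. F y t \<partial>lborel) \<partial>lborel)"
  proof (rule nn_integral_mono)
    fix y :: "real^3"
    define d where "d = sqrt ((y$2)\<^sup>2 + (y$3)\<^sup>2)"
    show "ennreal (\<bar>f y\<bar> / (r * sqrt ((ell_rho r y)\<^sup>2 - r\<^sup>2) * sin (ell_theta r y))) * indicator {y. ell_rho r y \<le> 2 * r} y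
       \<le> (\<integral>\<^sup>+ t. F y t \<partial>lborel)"
    proof (cases "ell_rho r y \<le> 2 * r \<and> d > 0")
      case False
      then consider "\<not> ell_rho r y \<le> 2 * r" | "ell_rho r y \<le> 2 * r" "d = 0"
        using real_sqrt_ge_zero[of "(y$2)\<^sup>2 + (y$3)\<^sup>2"] unfolding d_def[symmetric] by fastforce
      then show ?thesis
      proof cases
        case 1 then show ?thesis by simp
      next
        case 2
        have z: "r * sqrt ((ell_rho r y)\<^sup>2 - r\<^sup>2) * sin (ell_theta r y) = 0"
          using geo(3)[OF r 2(1)] 2(2) unfolding d_def by simp
        show ?thesis unfolding z by simp
      qed
    next
      case True
      then have E: "ell_rho r y \<le> 2 * r" and dp: "d > 0" by auto
      have D: "r * sqrt ((ell_rho r y)\<^sup>2 - r\<^sup>2) * sin (ell_theta r y) = 2 * r * d"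
        using geo(3)[OF r E] unfolding d_def by simp
      have low: "ennreal (1 / d) \<le> (\<integral>\<^sup>+ t. indicator I t * ennreal (1 / (norm (y - t *\<^sub>R e1))\<^sup>2) \<partial>lborel)"
        unfolding I_def
        by (rule lower[OF d_def dp]) (use geo(1,2)[OF r E] in \<open>simp_all add: d_def\<close>)
      have "ennreal (\<bar>f y\<bar> / (r * sqrt ((ell_rho r y)\<^sup>2 - r\<^sup>2) * sin (ell_theta r y))) * indicator {y. ell_rho r y \<le> 2 * r} y
          = ennreal (c * \<bar>f y\<bar>) * ennreal (1 / d)"
        unfolding D using E r dp c0 by (simp add: ennreal_mult[symmetric] c_def)
      also have "\<dots> \<le> ennreal (c * \<bar>f y\<bar>) * (\<integral>\<^sup>+ t. indicator I t * ennreal (1 / (norm (y - t *\<^sub>R e1))\<^sup>2) \<partial>lborel)"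
        by (rule mult_left_mono[OF low]) simp
      also have "\<dots> = (\<integral>\<^sup>+ t. ennreal (c * \<bar>f y\<bar>) * (indicator I t * ennreal (1 / (norm (y - t *\<^sub>R e1))\<^sup>2)) \<partial>lborel)"
        by (rule nn_integral_cmult[symmetric]) (simp add: I_def)
      also have "\<dots> = (\<integral>\<^sup>+ t. F y t \<partial>lborel)"
      proof (rule nn_integral_cong)
        fix t :: real
        have "ennreal (\<bar>f y\<bar> / (norm (y - t *\<^sub>R e1))\<^sup>2) = ennreal \<bar>f y\<bar> * ennreal (1 / (norm (y - t *\<^sub>R e1))\<^sup>2)"
          by (simp add: ennreal_mult[symmetric])
        then show "ennreal (c * \<bar>f y\<bar>) * (indicator I t * ennreal (1 / (norm (y - t *\<^sub>R e1))\<^sup>2)) = F y t"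
          unfolding F_def using c0 by (simp add: ennreal_mult ac_simps)
      qed
      finally show ?thesis .
    qed
  qed
  also have "\<dots> = (\<integral>\<^sup>+ t. (\<integral>\<^sup>+ y. F y t \<partial>lborel) \<partial>lborel)"
    by (rule lborel_pair.Fubini'[OF Fm, symmetric])
  also have "\<dots> \<le> (\<integral>\<^sup>+ t. (ennreal c * K2_norm f) * indicator I t \<partial>lborel)"
  proof (rule nn_integral_mono)
    fix t :: real
    have "(\<integral>\<^sup>+ y. F y t \<partial>lborel) = ennreal c * (indicator I t * (\<integral>\<^sup>+ y. ennreal (\<bar>f y\<bar> / (norm (y - t *\<^sub>R e1))\<^sup>2) \<partial>lborel))"
      unfolding F_def using f
      by (simp add: nn_integral_cmult)
    also have "\<dots> \<le> ennreal c * (indicator I t * K2_norm f)"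
    proof -
      have "(\<integral>\<^sup>+ y. ennreal (\<bar>f y\<bar> / (norm (y - t *\<^sub>R e1))\<^sup>2) \<partial>lborel) \<le> K2_norm f"
        unfolding K2_norm_def by (rule SUP_upper) simp
      then show ?thesis by (intro mult_left_mono) auto
    qed
    finally show "(\<integral>\<^sup>+ y. F y t \<partial>lborel) \<le> (ennreal c * K2_norm f) * indicator I t"
      by (simp add: ac_simps)
  qed
  also have "\<dots> = (ennreal c * K2_norm f) * ennreal (4 * r)"
    using r by (simp add: nn_integral_cmult_indicator I_def)
  also have "\<dots> = ennreal 2 * K2_norm f"
  proof -
    have "ennreal c * ennreal (4 * r) = ennreal 2"
      using r c0 by (simp add: ennreal_mult[symmetric] c_def)
    then show ?thesis by (metis mult.commute mult.left_commute)
  qed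
  finally show "(\<integral>\<^sup>+ y \<in> {y. ell_rho r y \<le> 2 * r}.
        ennreal (\<bar>f y\<bar> / (r * sqrt ((ell_rho r y)\<^sup>2 - r\<^sup>2) * sin (ell_theta r y))) \<partial>lborel)
      \<le> ennreal 2 * K2_norm f" .
qed


end
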